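(* The orbit space $\mathbb{C}P^5/T^4$ is homeomorphic to the join $S^2\ast\mathbb{C}P^2$.
   Context: The compact torus $T^4=(S^1)^4$ acts on $\mathbb{C}P^5$, with homogeneous coordinates $[z_{12}:z_{13}:z_{14}:z_{23}:z_{24}:z_{34}]$, by $z_{ij}\mapsto t_it_jz_{ij}$, i.e. via the composition of the second symmetric power $T^4\to T^6$, $(t_1,\dots,t_4)\mapsto(t_1t_2,t_1t_3,t_1t_4,t_2t_3,t_2t_4,t_3t_4)$, with the standard action of $T^6$ on $\mathbb{C}P^5$. *)

theory Defs
  imports "HOL-Analysis.Analysis"
begin

text \<open>Quotient topology of X by a relation R (intended an equivalence relation on
  topspace X): points are the equivalence classes, a set of classes is open iff
  its union is open in X.\<close>
definition quotient_top :: "'a topology \<Rightarrow> ('a \<Rightarrow> 'a \<Rightarrow> bool) \<Rightarrow> 'a set topology" where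
  "quotient_top X R = topology (\<lambda>U.
     U \<subseteq> (\<lambda>x. {y \<in> topspace X. R x y}) ` topspace X \<and> openin X (\<Union>U))"

text \<open>Complex projective space CP^(n-1) = (C^n - 0) / C^*, with C^n = complex^'n.\<close>
definition CP :: "('n::finite) itself \<Rightarrow> (complex ^ 'n) set topology" where
  "CP _ = quotient_top (top_of_set (UNIV - {0 :: complex ^ 'n}))
            (\<lambda>z w. \<exists>c::complex. c \<noteq> 0 \<and> w = c *s z)"

text \<open>Second symmetric power T^4 -> T^6, coordinates ordered 12,13,14,23,24,34
  (in the numeral types, index 4 of type 4 is 0 and index 6 of type 6 is 0).\<close>
definition sym2 :: "complex ^ 4 \<Rightarrow> complex ^ 6" where
  "sym2 t = (\<chi> k. if k = 1 then t$1 * t$2 else if k = 2 then t$1 * t$3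
        else if k = 3 then t$1 * t$4 else if k = 4 then t$2 * t$3
        else if k = 5 then t$2 * t$4 else t$3 * t$4)"

definition torus4 :: "(complex ^ 4) set" where
  "torus4 = {t. \<forall>i. norm (t$i) = 1}"

definition act :: "complex ^ 4 \<Rightarrow> complex ^ 6 \<Rightarrow> complex ^ 6" where
  "act t z = (\<chi> k. sym2 t $ k * z $ k)"

definition CP5_mod_T4 :: "(complex ^ 6) set set topology" where
  "CP5_mod_T4 = quotient_top (CP TYPE(6))
     (\<lambda>A B. \<exists>z\<in>A. \<exists>t\<in>torus4. act t z \<in> B)"

definition join_top :: "'a topology \<Rightarrow> 'b topology \<Rightarrow> ('a \<times> 'b \<times> real) set topology" where
  "join_top X Y = quotient_top
     (prod_topology X (prod_topology Y (top_of_set {0..1})))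
     (\<lambda>(x,y,s) (x',y',s'). s = s' \<and> (s \<noteq> 1 \<longrightarrow> x = x') \<and> (s \<noteq> 0 \<longrightarrow> y = y'))"

end

theory Submission
  imports Defs
begin


definition qcls :: "'a topology \<Rightarrow> ('a \<Rightarrow> 'a \<Rightarrow> bool) \<Rightarrow> 'a \<Rightarrow> 'a set" where
  "qcls X R x = {y \<in> topspace X. R x y}"

definition qequiv :: "'a topology \<Rightarrow> ('a \<Rightarrow> 'a \<Rightarrow> bool) \<Rightarrow> bool" where
  "qequiv X R \<longleftrightarrow> (\<forall>x\<in>topspace X. R x x) \<and> (\<forall>x\<in>topspace X. \<forall>y\<in>topspace X. R x y \<longrightarrow> R y x)
     \<and> (\<forall>x\<in>topspace X. \<forall>y\<in>topspace X. \<forall>z\<in>topspace X. R x y \<longrightarrow> R y z \<longrightarrow> R x z)"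

lemma qcls_self: "qequiv X R \<Longrightarrow> x \<in> topspace X \<Longrightarrow> x \<in> qcls X R x"
  by (auto simp: qequiv_def qcls_def)

lemma qcls_eq_iff: "qequiv X R \<Longrightarrow> x \<in> topspace X \<Longrightarrow> y \<in> topspace X \<Longrightarrow>
   qcls X R x = qcls X R y \<longleftrightarrow> R x y"
  unfolding qequiv_def qcls_def by blast

lemma qcls_mem: "qequiv X R \<Longrightarrow> x \<in> topspace X \<Longrightarrow> y \<in> qcls X R x \<Longrightarrow> qcls X R y = qcls X R x"
  unfolding qequiv_def qcls_def by blast

lemma qcls_sub: "qcls X R x \<subseteq> topspace X"
  unfolding qcls_def by blast

lemma quotient_top_alt: "quotient_top X R = topology (\<lambda>U.
     U \<subseteq> qcls X R ` topspace X \<and> openin X (\<Union>U))"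
  unfolding quotient_top_def qcls_def[abs_def] by (rule refl)

lemma istop_q_int:
  assumes "qequiv X R" and S: "S \<subseteq> qcls X R ` topspace X" and T: "T \<subseteq> qcls X R ` topspace X"
  shows "\<Union>(S \<inter> T) = \<Union>S \<inter> \<Union>T"
proof
  show "\<Union>S \<inter> \<Union>T \<subseteq> \<Union>(S \<inter> T)"
  proof
    fix y assume "y \<in> \<Union>S \<inter> \<Union>T"
    then obtain A B where AB: "A \<in> S" "B \<in> T" "y \<in> A" "y \<in> B" by blast
    then obtain a b where ab: "a \<in> topspace X" "b \<in> topspace X" "A = qcls X R a" "B = qcls X R b"
      using S T by blast
    have "A = qcls X R y" using qcls_mem[OF assms(1) ab(1)] AB ab by simp
    moreover have "B = qcls X R y" using qcls_mem[OF assms(1) ab(2)] AB ab by simp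
    ultimately show "y \<in> \<Union>(S \<inter> T)" using AB by blast
  qed
qed blast

lemma istop_q:
  assumes "qequiv X R"
  shows "istopology (\<lambda>U. U \<subseteq> qcls X R ` topspace X \<and> openin X (\<Union>U))"
proof -
  have 1: "\<forall>S T. (S \<subseteq> qcls X R ` topspace X \<and> openin X (\<Union>S)) \<longrightarrow> (T \<subseteq> qcls X R ` topspace X \<and> openin X (\<Union>T))
     \<longrightarrow> (S \<inter> T \<subseteq> qcls X R ` topspace X \<and> openin X (\<Union>(S \<inter> T)))"
  proof (intro allI impI)
    fix S T assume S: "S \<subseteq> qcls X R ` topspace X \<and> openin X (\<Union>S)" and T: "T \<subseteq> qcls X R ` topspace X \<and> openin X (\<Union>T)"
    have "openin X (\<Union>S \<inter> \<Union>T)" using S T by (intro openin_Int) auto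
    then show "S \<inter> T \<subseteq> qcls X R ` topspace X \<and> openin X (\<Union>(S \<inter> T))"
      using istop_q_int[OF assms, of S T] S T by auto
  qed
  have 2: "\<forall>K. (\<forall>S\<in>K. S \<subseteq> qcls X R ` topspace X \<and> openin X (\<Union>S)) \<longrightarrow> (\<Union>K \<subseteq> qcls X R ` topspace X \<and> openin X (\<Union>(\<Union>K)))"
  proof (intro allI impI conjI)
    fix K :: "'a set set set" assume K: "\<forall>S\<in>K. S \<subseteq> qcls X R ` topspace X \<and> openin X (\<Union>S)"
    then show "\<Union>K \<subseteq> qcls X R ` topspace X" by blast
    have "openin X (\<Union>(Union ` K))" using K by (intro openin_Union) auto
    moreover have "\<Union>(\<Union>K) = \<Union>(Union ` K)" by blast
    ultimately show "openin X (\<Union>(\<Union>K))" by simp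
  qed
  show ?thesis using conjI[OF 1 2] unfolding istopology_def by simp
qed

lemma openin_qt:
  "qequiv X R \<Longrightarrow> openin (quotient_top X R) U \<longleftrightarrow> U \<subseteq> qcls X R ` topspace X \<and> openin X (\<Union>U)"
proof -
  assume q: "qequiv X R"
  have "openin (quotient_top X R) = (\<lambda>U. U \<subseteq> qcls X R ` topspace X \<and> openin X (\<Union>U))"
    unfolding quotient_top_alt by (rule topology_inverse'[OF istop_q[OF q]])
  then show ?thesis by simp
qed

lemma topspace_qt:
  assumes "qequiv X R" shows "topspace (quotient_top X R) = qcls X R ` topspace X"
proof -
  have "\<Union>(qcls X R ` topspace X) = topspace X"
  proof
    show "\<Union>(qcls X R ` topspace X) \<subseteq> topspace X" by (simp add: UN_subset_iff qcls_sub)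
    show "topspace X \<subseteq> \<Union>(qcls X R ` topspace X)" using qcls_self[OF assms] by blast
  qed
  then have "openin (quotient_top X R) (qcls X R ` topspace X)"
    by (simp add: openin_qt[OF assms])
  then show ?thesis
  proof -
    have "topspace (quotient_top X R) \<subseteq> qcls X R ` topspace X" using openin_qt[OF assms, of "topspace (quotient_top X R)"] by simp
    moreover have "qcls X R ` topspace X \<subseteq> topspace (quotient_top X R)" using openin_subset[OF \<open>openin (quotient_top X R) (qcls X R ` topspace X)\<close>] .
    ultimately show ?thesis by blast
  qed
qed

lemma continuous_qcls:
  assumes "qequiv X R" shows "continuous_map X (quotient_top X R) (qcls X R)"
  unfolding continuous_map_def
proof (intro conjI allI impI)
  show "qcls X R \<in> topspace X \<rightarrow> topspace (quotient_top X R)"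
    using topspace_qt[OF assms] by auto
next
  fix U assume "openin (quotient_top X R) U"
  then have U: "U \<subseteq> qcls X R ` topspace X" "openin X (\<Union>U)" using openin_qt[OF assms] by auto
  have "{x \<in> topspace X. qcls X R x \<in> U} = \<Union>U"
  proof
    show "\<Union>U \<subseteq> {x \<in> topspace X. qcls X R x \<in> U}"
    proof
      fix y assume "y \<in> \<Union>U"
      then obtain A where A: "A \<in> U" "y \<in> A" by blast
      then obtain a where "a \<in> topspace X" "A = qcls X R a" using U by blast
      then show "y \<in> {x \<in> topspace X. qcls X R x \<in> U}"
      proof -
        have "y \<in> topspace X" using A \<open>A = qcls X R a\<close> qcls_sub[of X R a] by blast
        moreover have "qcls X R y = A" using qcls_mem[OF assms \<open>a \<in> topspace X\<close>, of y] A \<open>A = qcls X R a\<close> by simp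
        ultimately show ?thesis using A by simp
      qed
    qed
  qed (use qcls_self[OF assms] in blast)
  then show "openin X {x \<in> topspace X. qcls X R x \<in> U}" using U by simp
qed

definition qlift :: "('a \<Rightarrow> 'b) \<Rightarrow> 'a set \<Rightarrow> 'b" where
  "qlift f C = f (SOME x. x \<in> C)"

lemma qlift_qcls:
  assumes "qequiv X R" "x \<in> topspace X" "\<And>x y. x \<in> topspace X \<Longrightarrow> y \<in> topspace X \<Longrightarrow> R x y \<Longrightarrow> f x = f y"
  shows "qlift f (qcls X R x) = f x"
proof -
  have "(SOME y. y \<in> qcls X R x) \<in> qcls X R x" using qcls_self[OF assms(1,2)] by (meson someI)
  then show ?thesis unfolding qlift_def using assms(3)[OF assms(2)] by (auto simp: qcls_def)
qed

lemma continuous_qlift: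
  assumes q: "qequiv X R" and f: "continuous_map X Y f"
    and c: "\<And>x y. x \<in> topspace X \<Longrightarrow> y \<in> topspace X \<Longrightarrow> R x y \<Longrightarrow> f x = f y"
  shows "continuous_map (quotient_top X R) Y (qlift f)"
  unfolding continuous_map_def
proof (intro conjI allI impI)
  show "qlift f \<in> topspace (quotient_top X R) \<rightarrow> topspace Y"
  proof
    fix C assume "C \<in> topspace (quotient_top X R)"
    then obtain a where a: "a \<in> topspace X" "C = qcls X R a" using topspace_qt[OF q] by blast
    have "qlift f C = f a" using a qlift_qcls[OF q a(1) c] by simp
    then show "qlift f C \<in> topspace Y" using f a(1) by (simp add: continuous_map_def Pi_iff)
  qed
next
  fix V assume V: "openin Y V"
  let ?U = "{C \<in> topspace (quotient_top X R). qlift f C \<in> V}"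
  have "\<Union>?U = {x \<in> topspace X. f x \<in> V}"
  proof
    show "\<Union>?U \<subseteq> {x \<in> topspace X. f x \<in> V}"
    proof
      fix y assume "y \<in> \<Union>?U"
      then obtain C where C: "C \<in> topspace (quotient_top X R)" "qlift f C \<in> V" "y \<in> C" by blast
      then obtain a where a: "a \<in> topspace X" "C = qcls X R a" using topspace_qt[OF q] by blast
      have y: "y \<in> topspace X" "R a y" using C a by (auto simp: qcls_def)
      have "qlift f C = f a" using a qlift_qcls[OF q _ c] by simp
      also have "... = f y" using c a y by blast
      finally show "y \<in> {x \<in> topspace X. f x \<in> V}" using C y by simp
    qed
  next
    show "{x \<in> topspace X. f x \<in> V} \<subseteq> \<Union>?U"
    proof
      fix y assume y: "y \<in> {x \<in> topspace X. f x \<in> V}"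
      then have "qcls X R y \<in> ?U" using topspace_qt[OF q] qlift_qcls[OF q _ c, of y] by auto
      then show "y \<in> \<Union>?U" using qcls_self[OF q] y by blast
    qed
  qed
  moreover have "openin X {x \<in> topspace X. f x \<in> V}" using f V by (simp add: continuous_map)
  ultimately show "openin (quotient_top X R) ?U"
    using openin_qt[OF q] topspace_qt[OF q] by auto
qed

lemma compact_qt:
  assumes q: "qequiv X R" and "compactin X S" "qcls X R ` S = qcls X R ` topspace X"
  shows "compact_space (quotient_top X R)"
  using image_compactin[OF assms(2) continuous_qcls[OF q]] assms(3) topspace_qt[OF q]
  by (simp add: compact_space_def)


definition RC :: "complex^'n::finite \<Rightarrow> complex^'n \<Rightarrow> bool" where
  "RC z w \<longleftrightarrow> (\<exists>c::complex. c \<noteq> 0 \<and> w = c *s z)"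

abbreviation XC :: "(complex^'n::finite) topology" where
  "XC \<equiv> top_of_set (UNIV - {0})"

lemma CP_alt: "CP TYPE('n::finite) = quotient_top XC RC"
  unfolding CP_def RC_def[abs_def] by (rule refl)

lemma qequiv_RC: "qequiv (XC::(complex^'n::finite) topology) RC"
  unfolding qequiv_def RC_def
proof (intro conjI ballI impI)
  fix x :: "complex^'n" show "\<exists>c. c \<noteq> 0 \<and> x = c *s x" by (rule exI[of _ 1]) simp
next
  fix x y :: "complex^'n" assume "\<exists>c. c \<noteq> 0 \<and> y = c *s x"
  then obtain c where "c \<noteq> 0" "y = c *s x" by blast
  then show "\<exists>c. c \<noteq> 0 \<and> x = c *s y" by (intro exI[of _ "inverse c"]) (simp add: vector_smult_assoc)
next
  fix x y z :: "complex^'n" assume "\<exists>c. c \<noteq> 0 \<and> y = c *s x" "\<exists>c. c \<noteq> 0 \<and> z = c *s y"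
  then obtain c d where "c \<noteq> 0" "y = c *s x" "d \<noteq> 0" "z = d *s y" by blast
  then show "\<exists>c. c \<noteq> 0 \<and> z = c *s x" by (intro exI[of _ "d * c"]) (simp add: vector_smult_assoc)
qed

lemma topspace_CP: "topspace (CP TYPE('n::finite)) = qcls XC RC ` (UNIV - {0::complex^'n})"
  unfolding CP_alt topspace_qt[OF qequiv_RC] by simp

definition nsq :: "complex^'n::finite \<Rightarrow> real" where
  "nsq v = (\<Sum>i\<in>UNIV. (cmod (v$i))^2)"

lemma nsq_pos: "v \<noteq> 0 \<Longrightarrow> nsq v > 0"
proof -
  assume "v \<noteq> 0"
  then obtain i where i: "v$i \<noteq> 0" by (metis vec_eq_iff zero_index)
  show "nsq v > 0" unfolding nsq_def
    by (rule sum_pos2[of UNIV i]) (use i in auto)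
qed

lemma nsq_nonneg: "nsq v \<ge> 0"
  unfolding nsq_def by (simp add: sum_nonneg)

lemma nsq_scale: "nsq (c *s v) = (cmod c)^2 * nsq v"
  unfolding nsq_def by (simp add: norm_mult power_mult_distrib sum_distrib_left)

lemma nsq_zero_iff: "nsq v = 0 \<longleftrightarrow> v = 0"
proof
  assume "nsq v = 0" then show "v = 0" using nsq_pos[of v] by (cases "v = 0") auto
qed (simp add: nsq_def)

lemma csR: "r *\<^sub>R (z::complex) = complex_of_real r * z"
  by (rule scaleR_conv_of_real)

definition hm0 :: "complex^'n::finite \<Rightarrow> complex^'n^'n" where
  "hm0 w = (\<chi> k l. w$k * cnj (w$l))"

definition hm :: "complex^'n::finite \<Rightarrow> complex^'n^'n" where
  "hm v = (1 / nsq v) *\<^sub>R hm0 v"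

lemma hm0_scale: "hm0 (c *s v) = ((cmod c)^2) *\<^sub>R hm0 v"
proof -
  have cc: "c * cnj c = of_real ((cmod c)^2)" by (metis complex_norm_square)
  have "c * x * cnj (c * y) = (c * cnj c) * (x * cnj y)" for x y by (simp add: algebra_simps)
  then show ?thesis unfolding hm0_def
    by (simp add: vec_eq_iff csR cc)
qed

lemma continuous_nsq: "continuous_on S nsq"
  unfolding nsq_def by (intro continuous_intros)

lemma continuous_hm0: "continuous_on S (hm0 :: complex^'n::finite \<Rightarrow> _)"
  unfolding hm0_def by (intro continuous_intros)

lemma continuous_hm: "continuous_on (UNIV - {0}) (hm :: complex^'n::finite \<Rightarrow> _)"
  unfolding hm_def
  by (intro continuous_intros continuous_nsq continuous_hm0) (auto simp: nsq_zero_iff)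

lemma hm_scale: "c \<noteq> 0 \<Longrightarrow> hm (c *s v) = hm v"
  unfolding hm_def hm0_scale nsq_scale by simp

lemma hm0_inj:
  fixes a b :: "complex^'n::finite"
  assumes "hm0 a = hm0 b"
  shows "\<exists>l. cmod l = 1 \<and> b = l *s a"
proof (cases "a = 0")
  case True
  have "b$i * cnj (b$i) = 0" for i
    using arg_cong[OF assms, of "\<lambda>M. M$i$i"] True by (simp add: hm0_def)
  then have "b = 0" by (simp add: vec_eq_iff)
  then show ?thesis using True by (intro exI[of _ 1]) simp
next
  case False
  then obtain k where k: "a$k \<noteq> 0" by (metis vec_eq_iff zero_index)
  have e: "a$i * cnj (a$j) = b$i * cnj (b$j)" for i j
    using arg_cong[OF assms, of "\<lambda>M. M$i$j"] by (simp add: hm0_def)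
  have kk: "a$k * cnj (a$k) = b$k * cnj (b$k)" using e by simp
  have "complex_of_real ((cmod (a$k))^2) = complex_of_real ((cmod (b$k))^2)"
    using kk by (simp only: complex_norm_square)
  then have "(cmod (a$k))^2 = (cmod (b$k))^2" by (simp only: of_real_eq_iff)
  then have nk: "cmod (a$k) = cmod (b$k)" by (rule power2_eq_imp_eq) auto
  have bk: "b$k \<noteq> 0"
  proof
    assume "b$k = 0" then have "cmod (a$k) = 0" using nk by simp
    then show False using k by simp
  qed
  define l where "l = b$k / a$k"
  have "cmod l = 1" unfolding l_def using nk k bk by (simp add: norm_divide)
  moreover have "b = l *s a"
  proof (subst vec_eq_iff, intro allI)
    fix i
    have "b$i * cnj (b$k) = a$i * cnj (a$k)" using e by simp
    then have "b$i = a$i * cnj (a$k) / cnj (b$k)" using bk by (simp add: field_simps)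
    also have "... = a$i * (cnj (a$k) / cnj (b$k))" by simp
    also have "cnj (a$k) / cnj (b$k) = b$k / a$k"
    proof (subst frac_eq_eq)
      show "cnj (b$k) \<noteq> 0" using bk by simp
      show "a$k \<noteq> 0" by (rule k)
      show "cnj (a$k) * a$k = b$k * cnj (b$k)" using kk by (simp add: mult.commute)
    qed
    also have "a$i * (b$k / a$k) = (b$k / a$k) * a$i" by simp
    finally show "b$i = (l *s a)$i" by (simp add: l_def)
  qed
  ultimately show ?thesis by blast
qed


lemma RC_hm: "RC x y \<Longrightarrow> hm x = hm y"
  unfolding RC_def using hm_scale by metis

definition hq :: "(complex^'n::finite) set \<Rightarrow> complex^'n^'n" where
  "hq = qlift hm"

lemma hq_cls: "v \<noteq> 0 \<Longrightarrow> hq (qcls XC RC v) = hm v"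
  unfolding hq_def by (rule qlift_qcls[OF qequiv_RC]) (auto intro: RC_hm)

lemma continuous_hq: "continuous_map (CP TYPE('n::finite)) euclidean (hq :: _ \<Rightarrow> complex^'n^'n)"
  unfolding CP_alt hq_def
  by (rule continuous_qlift[OF qequiv_RC]) (auto intro: RC_hm simp: continuous_hm)

lemma sR_sm: "r *\<^sub>R (v::complex^'n::finite) = complex_of_real r *s v"
  by (simp add: vec_eq_iff csR)

lemma nsq_sR: "nsq (r *\<^sub>R v) = r^2 * nsq v"
  by (simp add: sR_sm nsq_scale)

lemma hm0_sR: "hm0 (r *\<^sub>R v) = r^2 *\<^sub>R hm0 v"
  by (simp add: sR_sm hm0_scale)

definition unitv :: "complex^'n::finite \<Rightarrow> complex^'n" where
  "unitv v = (1 / sqrt (nsq v)) *\<^sub>R v"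

lemma nsq_unitv: "v \<noteq> 0 \<Longrightarrow> nsq (unitv v) = 1"
  unfolding unitv_def nsq_sR using nsq_pos[of v] by (simp add: power_divide)

lemma hm_unitv: "v \<noteq> 0 \<Longrightarrow> hm v = hm0 (unitv v)"
  unfolding unitv_def hm0_sR hm_def using nsq_pos[of v] by (simp add: power_divide)

lemma unitv_ne: "v \<noteq> 0 \<Longrightarrow> unitv v \<noteq> 0"
  by (metis nsq_zero_iff nsq_unitv zero_neq_one)

lemma hm_inj:
  fixes v w :: "complex^'n::finite"
  assumes v: "v \<noteq> 0" and w: "w \<noteq> 0" and e: "hm v = hm w"
  shows "RC v w"
proof -
  have "hm0 (unitv v) = hm0 (unitv w)" using e hm_unitv v w by metis
  then obtain l where l: "cmod l = 1" "unitv w = l *s unitv v" using hm0_inj by blast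
  have pw: "sqrt (nsq w) > 0" using nsq_pos[OF w] by simp
  have pv: "sqrt (nsq v) > 0" using nsq_pos[OF v] by simp
  have "w = sqrt (nsq w) *\<^sub>R unitv w" unfolding unitv_def using pw by simp
  also have "... = complex_of_real (sqrt (nsq w)) *s (l *s (complex_of_real (1 / sqrt (nsq v)) *s v))"
    unfolding l(2) by (simp only: unitv_def sR_sm)
  also have "... = (complex_of_real (sqrt (nsq w)) * (l * complex_of_real (1 / sqrt (nsq v)))) *s v"
    by (simp only: vector_smult_assoc)
  finally have "w = (complex_of_real (sqrt (nsq w)) * (l * complex_of_real (1 / sqrt (nsq v)))) *s v" .
  moreover have "complex_of_real (sqrt (nsq w)) * (l * complex_of_real (1 / sqrt (nsq v))) \<noteq> 0"
    using pw pv l by auto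
  ultimately show ?thesis unfolding RC_def by blast
qed

lemma compact_CP: "compact_space (CP TYPE('n::finite))"
  unfolding CP_alt
proof (rule compact_qt[OF qequiv_RC, of "sphere 0 1"])
  show "compactin (top_of_set (UNIV - {0})) (sphere (0::complex^'n) 1)"
    by (simp add: compactin_subtopology compact_sphere) auto
  show "qcls XC RC ` sphere 0 1 = qcls XC RC ` topspace (XC::(complex^'n) topology)"
  proof
    show "qcls XC RC ` sphere 0 1 \<subseteq> qcls XC RC ` topspace (XC::(complex^'n) topology)" by auto
    show "qcls XC RC ` topspace (XC::(complex^'n) topology) \<subseteq> qcls XC RC ` sphere 0 1"
    proof
      fix C assume "C \<in> qcls XC RC ` topspace (XC::(complex^'n) topology)"
      then obtain v :: "complex^'n" where v: "v \<noteq> 0" "C = qcls XC RC v" by auto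
      define u where "u = (1 / norm v) *\<^sub>R v"
      have u: "u \<in> sphere 0 1" unfolding u_def using v by simp
      have "RC u v" unfolding RC_def
        by (rule exI[of _ "complex_of_real (norm v)"]) (use v in \<open>simp add: u_def sR_sm vector_smult_assoc\<close>)
      have u0: "u \<noteq> 0" using u by auto
      have "qcls XC RC u = qcls XC RC v" using qcls_eq_iff[OF qequiv_RC, of u v] u0 v(1) \<open>RC u v\<close> by simp
      then have "qcls XC RC u = C" using v(2) by simp
      then show "C \<in> qcls XC RC ` sphere 0 1" using u by blast
    qed
  qed
qed

definition Ntot :: "real^'m::finite \<Rightarrow> complex^'n::finite \<Rightarrow> real" where
  "Ntot d w = (norm d)^2 + nsq w"

definition Rp :: "real^'m::finite \<Rightarrow> complex^'n::finite \<Rightarrow> (real^'m) \<times> (complex^'n^'n)" where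
  "Rp d w = ((1 / sqrt (Ntot d w)) *\<^sub>R d, (1 / Ntot d w) *\<^sub>R hm0 w)"

lemma Ntot_pos: "d \<noteq> 0 \<or> w \<noteq> 0 \<Longrightarrow> Ntot d w > 0"
  unfolding Ntot_def using nsq_pos[of w] nsq_nonneg[of w] by (auto simp: add_pos_nonneg add_nonneg_pos)

lemma Rp_scale:
  assumes r: "r > 0" and l: "cmod l = 1"
  shows "Rp (r *\<^sub>R d) ((complex_of_real r * l) *s w) = Rp d w"
proof -
  have N: "Ntot (r *\<^sub>R d) ((complex_of_real r * l) *s w) = r^2 * Ntot d w"
    unfolding Ntot_def nsq_scale using r l by (simp add: norm_mult power_mult_distrib algebra_simps)
  have s: "sqrt (r^2 * Ntot d w) = r * sqrt (Ntot d w)" using r by (simp add: real_sqrt_mult)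
  have h: "hm0 ((complex_of_real r * l) *s w) = r^2 *\<^sub>R hm0 w"
    unfolding hm0_scale using r l by (simp add: norm_mult)
  show ?thesis unfolding Rp_def N s h using r by simp
qed

lemma Rp_inj:
  fixes d d' :: "real^'m::finite" and w w' :: "complex^'n::finite"
  assumes nz: "d \<noteq> 0 \<or> w \<noteq> 0" and nz': "d' \<noteq> 0 \<or> w' \<noteq> 0" and e: "Rp d w = Rp d' w'"
  shows "\<exists>r>0. \<exists>l. cmod l = 1 \<and> d' = r *\<^sub>R d \<and> w' = (complex_of_real r * l) *s w"
proof -
  define N where "N = Ntot d w"
  define N' where "N' = Ntot d' w'"
  have N: "N > 0" unfolding N_def using Ntot_pos[OF nz] .
  have N': "N' > 0" unfolding N'_def using Ntot_pos[OF nz'] .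
  define r where "r = sqrt N' / sqrt N"
  have r: "r > 0" unfolding r_def using N N' by simp
  have r2: "r^2 = N' / N" unfolding r_def using N N' by (simp add: power_divide)
  have e1: "(1 / sqrt N) *\<^sub>R d = (1 / sqrt N') *\<^sub>R d'" and e2: "(1 / N) *\<^sub>R hm0 w = (1 / N') *\<^sub>R hm0 w'"
    using e unfolding Rp_def N_def N'_def by auto
  have "d' = sqrt N' *\<^sub>R ((1 / sqrt N') *\<^sub>R d')" using N' by simp
  also have "... = sqrt N' *\<^sub>R ((1 / sqrt N) *\<^sub>R d)" using e1 by simp
  also have "... = r *\<^sub>R d" unfolding r_def by simp
  finally have d': "d' = r *\<^sub>R d" .
  have "hm0 w' = N' *\<^sub>R ((1 / N') *\<^sub>R hm0 w')" using N' by simp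
  also have "... = N' *\<^sub>R ((1 / N) *\<^sub>R hm0 w)" using e2 by simp
  also have "... = r^2 *\<^sub>R hm0 w" unfolding r2 by simp
  also have "... = hm0 (r *\<^sub>R w)" by (simp add: hm0_sR)
  finally obtain l where l: "cmod l = 1" "w' = l *s (r *\<^sub>R w)" using hm0_inj by metis
  have "w' = (complex_of_real r * l) *s w" unfolding l(2) sR_sm by (simp add: vector_smult_assoc mult.commute)
  then show ?thesis using r l d' by blast
qed

definition gj :: "real^'m::finite \<Rightarrow> complex^'n::finite^'n \<Rightarrow> real \<Rightarrow> (real^'m) \<times> (complex^'n^'n)" where
  "gj x H s = (((1 - s) / sqrt ((1 - s)^2 + s^2)) *\<^sub>R x, (s^2 / ((1 - s)^2 + s^2)) *\<^sub>R H)"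

lemma D_pos: "(1 - s)^2 + (s::real)^2 > 0"
  by (cases "s = 0") (auto simp: add_pos_nonneg add_nonneg_pos)

lemma continuous_gj: "continuous_on S (\<lambda>(x, H, s). gj x H s)"
  unfolding gj_def case_prod_unfold
  by (intro continuous_intros) (use D_pos in \<open>auto\<close>)

lemma gj_Rp:
  assumes "norm x = 1" "nsq u = 1"
  shows "gj x (hm0 u) s = Rp ((1 - s) *\<^sub>R x) (s *\<^sub>R u)"
proof -
  have "Ntot ((1 - s) *\<^sub>R x) (s *\<^sub>R u) = (1 - s)^2 + s^2"
    unfolding Ntot_def nsq_sR using assms by (simp add: power_mult_distrib)
  then show ?thesis unfolding gj_def Rp_def hm0_sR by (simp add: divide_inverse)
qed


lemma exhaust_6:
  fixes x :: 6
  shows "x = 1 \<or> x = 2 \<or> x = 3 \<or> x = 4 \<or> x = 5 \<or> x = 6"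
proof (induct x)
  case (of_int z)
  then have "z = 0 \<or> z = 1 \<or> z = 2 \<or> z = 3 \<or> z = 4 \<or> z = 5" by fastforce
  then show ?case by auto
qed

lemma forall_6: "(\<forall>i::6. P i) \<longleftrightarrow> P 1 \<and> P 2 \<and> P 3 \<and> P 4 \<and> P 5 \<and> P 6"
  by (metis exhaust_6)

lemma six_neq: "(1::6) \<noteq> 2" "(1::6) \<noteq> 3" "(1::6) \<noteq> 4" "(1::6) \<noteq> 5" "(1::6) \<noteq> 6"
  "(2::6) \<noteq> 3" "(2::6) \<noteq> 4" "(2::6) \<noteq> 5" "(2::6) \<noteq> 6" "(3::6) \<noteq> 4" "(3::6) \<noteq> 5" "(3::6) \<noteq> 6"
  "(4::6) \<noteq> 5" "(4::6) \<noteq> 6" "(5::6) \<noteq> 6"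
  by simp_all

lemma sym2_simps: "sym2 t $ 1 = t$1 * t$2" "sym2 t $ 2 = t$1 * t$3" "sym2 t $ 3 = t$1 * t$4"
  "sym2 t $ 4 = t$2 * t$3" "sym2 t $ 5 = t$2 * t$4" "sym2 t $ 6 = t$3 * t$4"
  by (simp_all add: sym2_def)

lemma act_simps: "act t z $ k = sym2 t $ k * z $ k"
  by (simp add: act_def)

lemma vec4_simps: "(vector [a,b,c,d] :: 'a::zero^4) $ 1 = a" "(vector [a,b,c,d] :: 'a^4) $ 2 = b"
   "(vector [a,b,c,d] :: 'a^4) $ 3 = c" "(vector [a,b,c,d] :: 'a^4) $ 4 = d"
  by (simp_all add: vector_def)


lemma unit_cnj: "cmod u = 1 \<Longrightarrow> cnj u = 1 / u"
proof -
  assume u: "cmod u = 1"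
  then have "u * cnj u = 1" by (metis complex_norm_square of_real_1 power_one)
  moreover have "u \<noteq> 0" using u by auto
  ultimately show ?thesis by (simp add: field_simps mult.commute)
qed

lemma pair_surj: "\<exists>a b::complex. (cmod a)^2 - (cmod b)^2 = \<delta> \<and> a * b = \<omega>"
proof -
  define \<rho> where "\<rho> = sqrt (\<delta>^2 + 4 * (cmod \<omega>)^2)"
  have \<rho>2: "\<rho>^2 = \<delta>^2 + 4 * (cmod \<omega>)^2" unfolding \<rho>_def by simp
  have \<rho>0: "\<rho> \<ge> 0" unfolding \<rho>_def by simp
  have \<rho>d: "\<rho> \<ge> \<bar>\<delta>\<bar>" unfolding \<rho>_def by (rule real_le_rsqrt) simp
  define A where "A = (\<rho> + \<delta>) / 2"
  have A0: "A \<ge> 0" unfolding A_def using \<rho>d by simp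
  show ?thesis
  proof (cases "A = 0")
    case True
    then have "\<rho> = - \<delta>" unfolding A_def by simp
    then have "\<omega> = 0" using \<rho>2 by simp
    have "(cmod 0)^2 - (cmod (complex_of_real (sqrt (- \<delta>))))^2 = \<delta>"
      using \<open>\<rho> = - \<delta>\<close> \<rho>0 by simp
    then show ?thesis using \<open>\<omega> = 0\<close> by (intro exI[of _ 0] exI[of _ "complex_of_real (sqrt (- \<delta>))"]) simp
  next
    case False
    then have Ap: "A > 0" using A0 by simp
    define a where "a = complex_of_real (sqrt A)"
    have a0: "a \<noteq> 0" unfolding a_def using Ap by simp
    have na: "(cmod a)^2 = A" unfolding a_def using Ap by simp
    have nb: "(cmod (\<omega> / a))^2 = (cmod \<omega>)^2 / A" using na by (simp add: norm_divide power_divide)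
    have "A^2 - (cmod \<omega>)^2 = \<delta> * A" unfolding A_def using \<rho>2 by (simp add: power2_eq_square field_simps)
    then have "A - (cmod \<omega>)^2 / A = \<delta>" using Ap by (simp add: field_simps power2_eq_square)
    then have "(cmod a)^2 - (cmod (\<omega> / a))^2 = \<delta>" using na nb by simp
    moreover have "a * (\<omega> / a) = \<omega>" using a0 by simp
    ultimately show ?thesis by blast
  qed
qed

lemma pair_orbit:
  fixes a b a' b' l :: complex and r :: real
  assumes r: "r > 0" and l: "cmod l = 1"
    and d: "(cmod a')^2 - (cmod b')^2 = r * ((cmod a)^2 - (cmod b)^2)"
    and p: "a' * b' = (complex_of_real r * l) * (a * b)"
  shows "\<exists>\<alpha>. cmod \<alpha> = 1 \<and> a' = complex_of_real (sqrt r) * \<alpha> * a \<and> b' = complex_of_real (sqrt r) * l * b / \<alpha>"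
proof -
  define X where "X = (cmod a')^2"
  define Y where "Y = (cmod b')^2"
  define A where "A = (cmod a)^2"
  define B where "B = (cmod b)^2"
  have XY: "X * Y = r^2 * (A * B)"
  proof -
    have "cmod a' * cmod b' = r * (cmod a * cmod b)"
      using arg_cong[OF p, of cmod] r l by (simp add: norm_mult)
    then have "(cmod a' * cmod b')^2 = (r * (cmod a * cmod b))^2" by simp
    then show ?thesis unfolding X_def Y_def A_def B_def by (simp add: power_mult_distrib)
  qed
  have dXY: "X - Y = r * (A - B)" using d unfolding X_def Y_def A_def B_def .
  have nn: "X \<ge> 0" "Y \<ge> 0" "A \<ge> 0" "B \<ge> 0" unfolding X_def Y_def A_def B_def by simp_all
  have "(X + Y)^2 = (r * (A + B))^2"
  proof -
    have "(X + Y)^2 = (X - Y)^2 + 4 * (X * Y)" by (simp add: power2_eq_square algebra_simps)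
    also have "... = (r * (A - B))^2 + 4 * (r^2 * (A * B))" using dXY XY by simp
    also have "... = (r * (A + B))^2" by (simp add: power2_eq_square algebra_simps)
    finally show ?thesis .
  qed
  then have "X + Y = r * (A + B)" by (rule power2_eq_imp_eq) (use nn r in auto)
  then have X: "X = r * A" and Y: "Y = r * B" using dXY by (simp_all add: algebra_simps)
  have na: "cmod a' = sqrt r * cmod a"
  proof -
    have "cmod a' = sqrt X" unfolding X_def by simp
    also have "... = sqrt r * cmod a" unfolding X A_def using r by (simp add: real_sqrt_mult)
    finally show ?thesis .
  qed
  have nb: "cmod b' = sqrt r * cmod b"
  proof -
    have "cmod b' = sqrt Y" unfolding Y_def by simp
    also have "... = sqrt r * cmod b" unfolding Y B_def using r by (simp add: real_sqrt_mult)
    finally show ?thesis .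
  qed
  have sr: "sqrt r > 0" using r by simp
  have srr: "complex_of_real (sqrt r) * complex_of_real (sqrt r) = complex_of_real r"
  proof -
    have "sqrt r * sqrt r = r" using r by simp
    then show ?thesis by (simp flip: of_real_mult)
  qed
  show ?thesis
  proof (cases "a = 0")
    case False
    define \<alpha> where "\<alpha> = a' / (complex_of_real (sqrt r) * a)"
    have a'0: "a' \<noteq> 0" using na False sr by auto
    have n\<alpha>: "cmod \<alpha> = 1" unfolding \<alpha>_def using na False sr by (simp add: norm_divide norm_mult)
    have \<alpha>0: "\<alpha> \<noteq> 0" using n\<alpha> by auto
    have ea: "a' = complex_of_real (sqrt r) * \<alpha> * a" unfolding \<alpha>_def using False sr by simp
    have eb: "b' = complex_of_real (sqrt r) * l * b / \<alpha>"
    proof (cases "b = 0")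
      case True
      then have "b' = 0" using nb by simp
      then show ?thesis using True by simp
    next
      case False
      have "b' = (complex_of_real r * l) * (a * b) / a'" using p a'0 by (simp add: field_simps)
      also have "... = (complex_of_real (sqrt r) * complex_of_real (sqrt r) * l) * (a * b) / (complex_of_real (sqrt r) * \<alpha> * a)"
        using srr ea by simp
      also have "... = complex_of_real (sqrt r) * l * b / \<alpha>"
        using \<open>a \<noteq> 0\<close> \<alpha>0 sr by (simp add: field_simps)
      finally show ?thesis .
    qed
    show ?thesis using n\<alpha> ea eb by blast
  next
    case True
    then have a'0: "a' = 0" using na by simp
    show ?thesis
    proof (cases "b = 0")
      case True
      then have "b' = 0" using nb by simp
      then show ?thesis using True \<open>a = 0\<close> a'0 by (intro exI[of _ 1]) simp
    next
      case False
      have b'0: "b' \<noteq> 0" using nb False sr by auto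
      define \<alpha> where "\<alpha> = complex_of_real (sqrt r) * l * b / b'"
      have n\<alpha>: "cmod \<alpha> = 1" unfolding \<alpha>_def using nb False sr l b'0 by (simp add: norm_divide norm_mult)
      have \<alpha>0: "\<alpha> \<noteq> 0" using n\<alpha> by auto
      have l0: "l \<noteq> 0" using l by auto
      have c0: "complex_of_real (sqrt r) * l * b \<noteq> 0" using l0 False sr by simp
      have "b' = complex_of_real (sqrt r) * l * b / \<alpha>" unfolding \<alpha>_def using b'0 c0
        by (simp add: divide_divide_eq_right)
      then show ?thesis using n\<alpha> a'0 \<open>a = 0\<close> by (intro exI[of _ \<alpha>]) simp
    qed
  qed
qed


definition dd :: "complex^6 \<Rightarrow> real^3" where
  "dd z = vector [(cmod (z$1))^2 - (cmod (z$6))^2, (cmod (z$2))^2 - (cmod (z$5))^2, (cmod (z$3))^2 - (cmod (z$4))^2]"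

definition ww :: "complex^6 \<Rightarrow> complex^3" where
  "ww z = vector [z$1 * z$6, z$2 * z$5, z$3 * z$4]"

definition Pz :: "complex^6 \<Rightarrow> (real^3) \<times> (complex^3^3)" where
  "Pz z = Rp (dd z) (ww z)"

lemma dd_comp: "dd z $ 1 = (cmod (z$1))^2 - (cmod (z$6))^2" "dd z $ 2 = (cmod (z$2))^2 - (cmod (z$5))^2"
  "dd z $ 3 = (cmod (z$3))^2 - (cmod (z$4))^2"
  by (simp_all add: dd_def)

lemma ww_comp: "ww z $ 1 = z$1 * z$6" "ww z $ 2 = z$2 * z$5" "ww z $ 3 = z$3 * z$4"
  by (simp_all add: ww_def)

lemma torus4_norm: "t \<in> torus4 \<Longrightarrow> cmod (t$1) = 1 \<and> cmod (t$2) = 1 \<and> cmod (t$3) = 1 \<and> cmod (t$4) = 1"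
  unfolding torus4_def by simp

lemma sym2_norm: "t \<in> torus4 \<Longrightarrow> cmod (sym2 t $ k) = 1"
  using exhaust_6[of k] torus4_norm[of t] by (auto simp: sym2_simps norm_mult)

lemma Pz_scale:
  assumes c: "c \<noteq> 0" shows "Pz (c *s z) = Pz z"
proof -
  have d: "dd (c *s z) = ((cmod c)^2) *\<^sub>R dd z"
    unfolding vec_eq_iff forall_3 by (simp add: dd_comp norm_mult power_mult_distrib algebra_simps)
  define l where "l = c * c / complex_of_real ((cmod c)^2)"
  have r: "(cmod c)^2 > 0" using c by simp
  have l: "cmod l = 1" unfolding l_def using c by (simp add: norm_divide norm_mult power2_eq_square)
  have cc: "c * c = complex_of_real ((cmod c)^2) * l" unfolding l_def using r by simp
  have w: "ww (c *s z) = (complex_of_real ((cmod c)^2) * l) *s ww z"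
    unfolding vec_eq_iff forall_3 cc[symmetric] by (simp add: ww_comp algebra_simps)
  show ?thesis unfolding Pz_def d w by (rule Rp_scale[OF r l])
qed

lemma dd_act: "t \<in> torus4 \<Longrightarrow> dd (act t z) = dd z"
  unfolding vec_eq_iff forall_3 using sym2_norm[of t]
  by (simp add: dd_comp act_simps norm_mult)

lemma ww_act: "ww (act t z) = (t$1 * t$2 * t$3 * t$4) *s ww z"
  unfolding vec_eq_iff forall_3 by (simp add: ww_comp act_simps sym2_simps algebra_simps)

lemma Pz_act:
  assumes t: "t \<in> torus4" shows "Pz (act t z) = Pz z"
proof -
  have l: "cmod (t$1 * t$2 * t$3 * t$4) = 1" using torus4_norm[OF t] by (simp add: norm_mult)
  have "Pz (act t z) = Rp (1 *\<^sub>R dd z) ((complex_of_real 1 * (t$1 * t$2 * t$3 * t$4)) *s ww z)"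
    unfolding Pz_def dd_act[OF t] ww_act by simp
  also have "... = Pz z" unfolding Pz_def by (rule Rp_scale) (use l in auto)
  finally show ?thesis .
qed

lemma pair_zero: "(cmod a)^2 - (cmod b)^2 = 0 \<Longrightarrow> a * b = 0 \<Longrightarrow> a = 0 \<and> (b::complex) = 0"
  by auto

lemma dd_ww_nz: "z \<noteq> 0 \<Longrightarrow> dd z \<noteq> 0 \<or> ww z \<noteq> 0"
proof (rule ccontr)
  assume z: "z \<noteq> 0" and "\<not> (dd z \<noteq> 0 \<or> ww z \<noteq> 0)"
  then have "dd z = 0" "ww z = 0" by auto
  then have h: "dd z $ i = 0" "ww z $ i = 0" for i by simp_all
  have "z$1 = 0 \<and> z$6 = 0" using h(1)[of 1] h(2)[of 1] unfolding dd_comp ww_comp by (rule pair_zero)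
  moreover have "z$2 = 0 \<and> z$5 = 0" using h(1)[of 2] h(2)[of 2] unfolding dd_comp ww_comp by (rule pair_zero)
  moreover have "z$3 = 0 \<and> z$4 = 0" using h(1)[of 3] h(2)[of 3] unfolding dd_comp ww_comp by (rule pair_zero)
  ultimately have "z = 0" unfolding vec_eq_iff forall_6 by simp
  then show False using z by simp
qed

lemma dd_ww_surj:
  assumes "d \<noteq> 0 \<or> w \<noteq> 0"
  shows "\<exists>z. z \<noteq> 0 \<and> dd z = d \<and> ww z = w"
proof -
  obtain a1 b1 where p1: "(cmod a1)^2 - (cmod b1)^2 = d$1" "a1 * b1 = w$1" using pair_surj by blast
  obtain a2 b2 where p2: "(cmod a2)^2 - (cmod b2)^2 = d$2" "a2 * b2 = w$2" using pair_surj by blast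
  obtain a3 b3 where p3: "(cmod a3)^2 - (cmod b3)^2 = d$3" "a3 * b3 = w$3" using pair_surj by blast
  define z :: "complex^6" where "z = (\<chi> i. if i = 1 then a1 else if i = 2 then a2 else if i = 3 then a3
      else if i = 4 then b3 else if i = 5 then b2 else b1)"
  have zc: "z$1 = a1" "z$2 = a2" "z$3 = a3" "z$4 = b3" "z$5 = b2" "z$6 = b1"
    unfolding z_def by simp_all
  have d: "dd z = d" unfolding vec_eq_iff forall_3 dd_comp zc using p1 p2 p3 by simp
  have w: "ww z = w" unfolding vec_eq_iff forall_3 ww_comp zc using p1 p2 p3 by simp
  have "z \<noteq> 0"
  proof
    assume "z = 0"
    then have "dd z = 0" "ww z = 0" by (simp_all add: vec_eq_iff forall_3 dd_comp ww_comp)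
    then show False using assms d w by simp
  qed
  then show ?thesis using d w by blast
qed

lemma Pz_orbit:
  assumes z: "z \<noteq> 0" and z': "z' \<noteq> 0" and e: "Pz z = Pz z'"
  shows "\<exists>c t. c \<noteq> 0 \<and> t \<in> torus4 \<and> z' = c *s act t z"
proof -
  obtain r l where r: "r > 0" and l: "cmod l = 1" and d: "dd z' = r *\<^sub>R dd z"
    and w: "ww z' = (complex_of_real r * l) *s ww z"
    using Rp_inj[OF dd_ww_nz[OF z] dd_ww_nz[OF z'] e[unfolded Pz_def]] by blast
  have dk: "dd z' $ k = r * dd z $ k" for k using d by simp
  have wk: "ww z' $ k = (complex_of_real r * l) * ww z $ k" for k using w by simp
  obtain \<alpha>1 where a1: "cmod \<alpha>1 = 1" "z'$1 = complex_of_real (sqrt r) * \<alpha>1 * z$1"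
      "z'$6 = complex_of_real (sqrt r) * l * z$6 / \<alpha>1"
    using pair_orbit[OF r l dk[of 1, unfolded dd_comp] wk[of 1, unfolded ww_comp]] by blast
  obtain \<alpha>2 where a2: "cmod \<alpha>2 = 1" "z'$2 = complex_of_real (sqrt r) * \<alpha>2 * z$2"
      "z'$5 = complex_of_real (sqrt r) * l * z$5 / \<alpha>2"
    using pair_orbit[OF r l dk[of 2, unfolded dd_comp] wk[of 2, unfolded ww_comp]] by blast
  obtain \<alpha>3 where a3: "cmod \<alpha>3 = 1" "z'$3 = complex_of_real (sqrt r) * \<alpha>3 * z$3"
      "z'$4 = complex_of_real (sqrt r) * l * z$4 / \<alpha>3"
    using pair_orbit[OF r l dk[of 3, unfolded dd_comp] wk[of 3, unfolded ww_comp]] by blast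
  define t1 where "t1 = csqrt (\<alpha>1 * \<alpha>2 * \<alpha>3 / l)"
  have nt1: "cmod t1 = 1" unfolding t1_def using a1 a2 a3 l by (simp add: norm_mult norm_divide)
  have t10: "t1 \<noteq> 0" using nt1 by auto
  have t1sq: "t1 * t1 = \<alpha>1 * \<alpha>2 * \<alpha>3 / l" unfolding t1_def by (metis power2_csqrt power2_eq_square)
  have n0: "\<alpha>1 \<noteq> 0" "\<alpha>2 \<noteq> 0" "\<alpha>3 \<noteq> 0" "l \<noteq> 0" using a1 a2 a3 l by auto
  define t :: "complex^4" where "t = vector [t1, \<alpha>1 / t1, \<alpha>2 / t1, \<alpha>3 / t1]"
  have tc: "t$1 = t1" "t$2 = \<alpha>1 / t1" "t$3 = \<alpha>2 / t1" "t$4 = \<alpha>3 / t1"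
    unfolding t_def by (simp_all add: vec4_simps)
  have tt: "t \<in> torus4" unfolding torus4_def
  proof
    show "\<forall>i. norm (t $ i) = 1" unfolding forall_4 tc using nt1 a1 a2 a3 by (simp add: norm_divide)
  qed
  define c where "c = complex_of_real (sqrt r)"
  have c0: "c \<noteq> 0" unfolding c_def using r by simp
  have s: "sym2 t $ 1 = \<alpha>1" "sym2 t $ 2 = \<alpha>2" "sym2 t $ 3 = \<alpha>3"
     "sym2 t $ 4 = l / \<alpha>3" "sym2 t $ 5 = l / \<alpha>2" "sym2 t $ 6 = l / \<alpha>1"
  proof -
    show "sym2 t $ 1 = \<alpha>1" "sym2 t $ 2 = \<alpha>2" "sym2 t $ 3 = \<alpha>3"
      unfolding sym2_simps tc using t10 by simp_all
    have q: "\<alpha>1 * \<alpha>2 / (t1 * t1) = l / \<alpha>3" "\<alpha>1 * \<alpha>3 / (t1 * t1) = l / \<alpha>2" "\<alpha>2 * \<alpha>3 / (t1 * t1) = l / \<alpha>1"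
      unfolding t1sq using n0 by (simp_all add: field_simps)
    show "sym2 t $ 4 = l / \<alpha>3" "sym2 t $ 5 = l / \<alpha>2" "sym2 t $ 6 = l / \<alpha>1"
      unfolding sym2_simps tc using q by (simp_all add: field_simps)
  qed
  have "z' = c *s act t z"
    unfolding vec_eq_iff forall_6 using a1 a2 a3 s
    by (simp add: act_simps c_def algebra_simps)
  then show ?thesis using c0 tt by blast
qed


definition RT :: "(complex^6) set \<Rightarrow> (complex^6) set \<Rightarrow> bool" where
  "RT A B \<longleftrightarrow> (\<exists>z\<in>A. \<exists>t\<in>torus4. act t z \<in> B)"

lemma CP5_alt: "CP5_mod_T4 = quotient_top (CP TYPE(6)) RT"
  unfolding CP5_mod_T4_def RT_def[abs_def] by (rule refl)

lemma mem_cls: "y \<in> qcls XC RC z \<longleftrightarrow> y \<noteq> 0 \<and> RC z y"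
  by (simp add: qcls_def)

lemma act_one: "act (vector [1,1,1,1]) z = z"
  unfolding vec_eq_iff forall_6 by (simp add: act_simps sym2_simps vec4_simps)

lemma act_act: "act s (act t z) = act (\<chi> i. s$i * t$i) z"
  unfolding vec_eq_iff forall_6 by (simp add: act_simps sym2_simps algebra_simps)

lemma act_smult: "act t (c *s z) = c *s act t z"
  unfolding vec_eq_iff by (simp add: act_simps algebra_simps)

lemma act_ne: "t \<in> torus4 \<Longrightarrow> z \<noteq> 0 \<Longrightarrow> act t z \<noteq> 0"
proof
  assume t: "t \<in> torus4" and z: "z \<noteq> 0" and a: "act t z = 0"
  have "z$k = 0" for k
  proof -
    have "act t z $ k = 0" using a by simp
    then have "sym2 t $ k * z $ k = 0" by (simp add: act_simps)
    moreover have "sym2 t $ k \<noteq> 0" using sym2_norm[OF t, of k] by auto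
    ultimately show ?thesis by simp
  qed
  then show False using z by (simp add: vec_eq_iff)
qed

lemma torus_one: "vector [1,1,1,1] \<in> torus4"
  unfolding torus4_def forall_4 by (simp add: vec4_simps)

lemma torus_mult: "s \<in> torus4 \<Longrightarrow> t \<in> torus4 \<Longrightarrow> (\<chi> i. s$i * t$i) \<in> torus4"
  unfolding torus4_def by (simp add: norm_mult)

lemma torus_cnj: "t \<in> torus4 \<Longrightarrow> (\<chi> i. cnj (t$i)) \<in> torus4"
  unfolding torus4_def by simp

lemma act_cnj: "t \<in> torus4 \<Longrightarrow> act (\<chi> i. cnj (t$i)) (act t z) = z"
proof -
  assume t: "t \<in> torus4"
  have "(\<chi> i. (\<chi> i. cnj (t$i)) $ i * t$i) = (vector [1,1,1,1] :: complex^4)"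
  proof -
    have "cnj (t$i) * t$i = 1" for i
      using complex_norm_square[of "t$i"] t unfolding torus4_def by (simp add: mult.commute)
    then show ?thesis unfolding vec_eq_iff forall_4 by (simp add: vec4_simps)
  qed
  then have "act (\<chi> i. cnj (t$i)) (act t z) = act (vector [1,1,1,1]) z" by (simp only: act_act)
  then show ?thesis by (simp only: act_one)
qed

lemma topspace_CP6: "A \<in> topspace (CP TYPE(6)) \<longleftrightarrow> (\<exists>z. z \<noteq> 0 \<and> A = qcls XC RC z)"
  unfolding topspace_CP by auto

lemma cls_rep: "A \<in> topspace (CP TYPE(6)) \<Longrightarrow> z \<in> A \<Longrightarrow> A = qcls XC RC z \<and> z \<noteq> 0"
proof -
  assume A: "A \<in> topspace (CP TYPE(6))" and z: "z \<in> A"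
  then obtain w where w: "w \<noteq> 0" "A = qcls XC RC w" using topspace_CP6 by blast
  then have "qcls XC RC z = A" using qcls_mem[OF qequiv_RC, of w z] z by simp
  then show ?thesis using z by (auto simp: qcls_def)
qed

lemma RC_smult: "c \<noteq> 0 \<Longrightarrow> RC z (c *s z)"
  unfolding RC_def by blast

lemma qequiv_RT: "qequiv (CP TYPE(6)) RT"
  unfolding qequiv_def
proof (intro conjI ballI impI)
  fix A assume A: "A \<in> topspace (CP TYPE(6))"
  then obtain z where z: "z \<noteq> 0" "A = qcls XC RC z" using topspace_CP6 by blast
  then have "z \<in> A" using qcls_self[OF qequiv_RC, of z] by simp
  moreover have "act (vector [1,1,1,1]) z \<in> A" using \<open>z \<in> A\<close> by (simp only: act_one)
  ultimately show "RT A A" unfolding RT_def using torus_one by blast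
next
  fix A B assume A: "A \<in> topspace (CP TYPE(6))" and B: "B \<in> topspace (CP TYPE(6))" and "RT A B"
  then obtain z t where z: "z \<in> A" and t: "t \<in> torus4" and tz: "act t z \<in> B" unfolding RT_def by blast
  have "act (\<chi> i. cnj (t$i)) (act t z) \<in> A" using act_cnj[OF t] z by simp
  then show "RT B A" unfolding RT_def using tz torus_cnj[OF t] by blast
next
  fix A B C assume A: "A \<in> topspace (CP TYPE(6))" and B: "B \<in> topspace (CP TYPE(6))"
     and C: "C \<in> topspace (CP TYPE(6))" and "RT A B" "RT B C"
  then obtain z t y s where z: "z \<in> A" and t: "t \<in> torus4" and tz: "act t z \<in> B"
    and y: "y \<in> B" and s: "s \<in> torus4" and sy: "act s y \<in> C" unfolding RT_def by blast
  have B': "B = qcls XC RC (act t z)" and "act t z \<noteq> 0" using cls_rep[OF B tz] by auto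
  then have "RC (act t z) y" using y by (simp add: mem_cls)
  then obtain c where c: "c \<noteq> 0" "y = c *s act t z" unfolding RC_def by blast
  have C': "C = qcls XC RC (act s y)" and sy0: "act s y \<noteq> 0" using cls_rep[OF C sy] by auto
  have e: "act s y = c *s act (\<chi> i. s$i * t$i) z" unfolding c(2) act_smult act_act ..
  have "act (\<chi> i. s$i * t$i) z = inverse c *s act s y" unfolding e using c(1) by (simp add: vector_smult_assoc)
  moreover have "inverse c \<noteq> 0" using c by simp
  ultimately have "RC (act s y) (act (\<chi> i. s$i * t$i) z)" using RC_smult[of "inverse c" "act s y"] by simp
  moreover have "act (\<chi> i. s$i * t$i) z \<noteq> 0" using act_ne[OF torus_mult[OF s t]] cls_rep[OF A z] by simp
  ultimately have "act (\<chi> i. s$i * t$i) z \<in> C" unfolding C' by (simp add: mem_cls)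
  then show "RT A C" unfolding RT_def using z torus_mult[OF s t] by blast
qed

lemma continuous_vector3: "continuous_on S f \<Longrightarrow> continuous_on S g \<Longrightarrow> continuous_on S h \<Longrightarrow>
   continuous_on S (\<lambda>x. vector [f x, g x, h x] :: 'a::real_normed_vector^3)"
proof -
  assume c: "continuous_on S f" "continuous_on S g" "continuous_on S h"
  have e: "(\<lambda>x. vector [f x, g x, h x] :: 'a^3) = (\<lambda>x. \<chi> i. if i = 1 then f x else if i = 2 then g x else h x)"
    by (rule ext) (simp add: vec_eq_iff forall_3)
  show ?thesis unfolding e
  proof (rule continuous_on_vec_lambda)
    fix i :: 3
    show "continuous_on S (\<lambda>x. if i = 1 then f x else if i = 2 then g x else h x)"
      using c by (cases "i = 1"; cases "i = 2") auto
  qed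
qed

lemma continuous_dd: "continuous_on S dd"
  unfolding dd_def by (intro continuous_vector3 continuous_intros)

lemma continuous_ww: "continuous_on S ww"
  unfolding ww_def by (intro continuous_vector3 continuous_intros)

lemma Ntot_Pz_pos: "z \<noteq> 0 \<Longrightarrow> (norm (dd z))^2 + (\<Sum>i\<in>UNIV. (cmod (ww z $ i))^2) > 0"
  using Ntot_pos[OF dd_ww_nz] unfolding Ntot_def nsq_def by blast

lemma continuous_Pz: "continuous_on (UNIV - {0}) Pz"
  unfolding Pz_def[abs_def] Rp_def Ntot_def nsq_def hm0_def
  by (intro continuous_intros continuous_dd continuous_ww) (use Ntot_Pz_pos in force)+

definition P1 :: "(complex^6) set \<Rightarrow> (real^3) \<times> (complex^3^3)" where
  "P1 = qlift Pz"

lemma RC_Pz: "RC x y \<Longrightarrow> Pz x = Pz y"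
  unfolding RC_def using Pz_scale by metis

lemma P1_cls: "z \<noteq> 0 \<Longrightarrow> P1 (qcls XC RC z) = Pz z"
  unfolding P1_def by (rule qlift_qcls[OF qequiv_RC]) (auto intro: RC_Pz)

lemma continuous_P1: "continuous_map (CP TYPE(6)) euclidean P1"
  unfolding CP_alt P1_def
  by (rule continuous_qlift[OF qequiv_RC]) (auto intro: RC_Pz simp: continuous_Pz)

lemma RT_P1: "A \<in> topspace (CP TYPE(6)) \<Longrightarrow> B \<in> topspace (CP TYPE(6)) \<Longrightarrow> RT A B \<Longrightarrow> P1 A = P1 B"
proof -
  assume A: "A \<in> topspace (CP TYPE(6))" and B: "B \<in> topspace (CP TYPE(6))" and "RT A B"
  then obtain z t where z: "z \<in> A" and t: "t \<in> torus4" and tz: "act t z \<in> B" unfolding RT_def by blast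
  have "P1 A = Pz z" using cls_rep[OF A z] P1_cls by metis
  moreover have "P1 B = Pz (act t z)" using cls_rep[OF B tz] P1_cls by metis
  ultimately show ?thesis using Pz_act[OF t] by simp
qed

definition P2 :: "(complex^6) set set \<Rightarrow> (real^3) \<times> (complex^3^3)" where
  "P2 = qlift P1"

lemma continuous_P2: "continuous_map CP5_mod_T4 euclidean P2"
  unfolding CP5_alt P2_def
  by (rule continuous_qlift[OF qequiv_RT continuous_P1 RT_P1])

lemma P2_cls: "z \<noteq> 0 \<Longrightarrow> P2 (qcls (CP TYPE(6)) RT (qcls XC RC z)) = Pz z"
proof -
  assume z: "z \<noteq> 0"
  have A: "qcls XC RC z \<in> topspace (CP TYPE(6))" using z topspace_CP6 by blast
  have "P2 (qcls (CP TYPE(6)) RT (qcls XC RC z)) = P1 (qcls XC RC z)"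
    unfolding P2_def by (rule qlift_qcls[OF qequiv_RT A RT_P1])
  then show ?thesis using P1_cls[OF z] by simp
qed

lemma topspace_CP5: "topspace CP5_mod_T4 = (\<lambda>z. qcls (CP TYPE(6)) RT (qcls XC RC z)) ` (UNIV - {0})"
  unfolding CP5_alt topspace_qt[OF qequiv_RT] topspace_CP by auto

lemma compact_CP5: "compact_space CP5_mod_T4"
  unfolding CP5_alt
  by (rule compact_qt[OF qequiv_RT, of "topspace (CP TYPE(6))"])
     (use compact_CP[where 'n=6] in \<open>auto simp: compact_space_def\<close>)

lemma P2_image: "P2 ` topspace CP5_mod_T4 = Pz ` (UNIV - {0})"
  unfolding topspace_CP5 image_image using P2_cls by (intro image_cong) auto

lemma P2_inj: "inj_on P2 (topspace CP5_mod_T4)"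
proof (rule inj_onI)
  fix p q assume "p \<in> topspace CP5_mod_T4" "q \<in> topspace CP5_mod_T4" and e: "P2 p = P2 q"
  then obtain z z' where z: "z \<noteq> 0" "p = qcls (CP TYPE(6)) RT (qcls XC RC z)"
    and z': "z' \<noteq> 0" "q = qcls (CP TYPE(6)) RT (qcls XC RC z')" unfolding topspace_CP5 by auto
  have "Pz z = Pz z'" using e z z' P2_cls by metis
  then obtain c t where c: "c \<noteq> 0" and t: "t \<in> torus4" and zz: "z' = c *s act t z"
    using Pz_orbit[OF z(1) z'(1)] by blast
  have A: "qcls XC RC z \<in> topspace (CP TYPE(6))" using z topspace_CP6 by blast
  have B: "qcls XC RC z' \<in> topspace (CP TYPE(6))" using z' topspace_CP6 by blast
  have "act t z = inverse c *s z'" unfolding zz using c by (simp add: vector_smult_assoc)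
  then have "RC z' (act t z)" using RC_smult[of "inverse c" z'] c by simp
  moreover have "act t z \<noteq> 0" using act_ne[OF t z(1)] .
  ultimately have "act t z \<in> qcls XC RC z'" by (simp add: mem_cls)
  moreover have "z \<in> qcls XC RC z" using qcls_self[OF qequiv_RC, of z] z by simp
  ultimately have "RT (qcls XC RC z) (qcls XC RC z')" unfolding RT_def using t by blast
  then show "p = q" unfolding z(2) z'(2) using qcls_eq_iff[OF qequiv_RT A B] by simp
qed


type_synonym jpt = "(real^3) \<times> ((complex^3) set \<times> real)"

definition RJ :: "jpt \<Rightarrow> jpt \<Rightarrow> bool" where
  "RJ = (\<lambda>(x,y,s) (x',y',s'). s = s' \<and> (s \<noteq> 1 \<longrightarrow> x = x') \<and> (s \<noteq> 0 \<longrightarrow> y = y'))"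

abbreviation JX :: "jpt topology" where
  "JX \<equiv> prod_topology (top_of_set (sphere (0::real^3) 1)) (prod_topology (CP TYPE(3)) (top_of_set {0..1::real}))"

lemma join_alt: "join_top (top_of_set (sphere (0::real^3) 1)) (CP TYPE(3)) = quotient_top JX RJ"
  unfolding join_top_def RJ_def by (rule refl)

lemma RJ_iff: "RJ (x,y,s) (x',y',s') \<longleftrightarrow> s = s' \<and> (s \<noteq> 1 \<longrightarrow> x = x') \<and> (s \<noteq> 0 \<longrightarrow> y = y')"
  by (simp add: RJ_def)

lemma qequiv_RJ: "qequiv JX RJ"
  unfolding qequiv_def by (auto simp: RJ_def)

definition Qr :: "jpt \<Rightarrow> (real^3) \<times> (complex^3^3)" where
  "Qr p = gj (fst p) (hq (fst (snd p))) (snd (snd p))"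

lemma continuous_Qr: "continuous_map JX euclidean Qr"
proof -
  have c1: "continuous_map JX euclidean (\<lambda>p. (fst p, hq (fst (snd p)), snd (snd p)))"
  proof -
    have a: "continuous_map JX euclidean fst"
      by (rule continuous_map_into_fulltopology[OF continuous_map_fst])
    have b: "continuous_map JX euclidean (\<lambda>p. hq (fst (snd p)))"
      using continuous_map_compose[OF continuous_map_compose[OF continuous_map_snd continuous_map_fst] continuous_hq]
      by (simp add: o_def)
    have c: "continuous_map JX euclidean (\<lambda>p. snd (snd p))"
      using continuous_map_into_fulltopology[OF continuous_map_compose[OF continuous_map_snd continuous_map_snd]]
      by (simp add: o_def)
    have "continuous_map JX (prod_topology euclidean (prod_topology euclidean euclidean)) (\<lambda>p. (fst p, hq (fst (snd p)), snd (snd p)))"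
      using a b c by (intro continuous_map_pairedI)
    then show ?thesis by simp
  qed
  have c2: "continuous_map euclidean euclidean (\<lambda>(x :: real^3, H :: complex^3^3, s :: real). gj x H s)"
    using continuous_gj[of UNIV] by simp
  have "Qr = (\<lambda>(x, H, s). gj x H s) \<circ> (\<lambda>p. (fst p, hq (fst (snd p)), snd (snd p)))"
    by (rule ext) (simp add: Qr_def)
  then show ?thesis using continuous_map_compose[OF c1 c2] by simp
qed

lemma gj_1: "gj x H 1 = (0, H)" unfolding gj_def by simp
lemma gj_0: "gj x H 0 = (x, 0)" unfolding gj_def by simp

lemma RJ_Qr: "p \<in> topspace JX \<Longrightarrow> q \<in> topspace JX \<Longrightarrow> RJ p q \<Longrightarrow> Qr p = Qr q"
proof -
  assume "RJ p q"
  obtain x Y s where p: "p = (x, Y, s)" by (metis prod.exhaust)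
  obtain x' Y' s' where q: "q = (x', Y', s')" by (metis prod.exhaust)
  have h: "s = s'" "s \<noteq> 1 \<longrightarrow> x = x'" "s \<noteq> 0 \<longrightarrow> Y = Y'" using \<open>RJ p q\<close> unfolding p q RJ_iff by auto
  show ?thesis
  proof (cases "s = 1")
    case True then show ?thesis using h unfolding p q Qr_def by (simp add: gj_1)
  next
    case False
    show ?thesis
    proof (cases "s = 0")
      case True then show ?thesis using h unfolding p q Qr_def by (simp add: gj_0)
    next
      case False then show ?thesis using h \<open>s \<noteq> 1\<close> unfolding p q Qr_def by simp
    qed
  qed
qed

definition Q2 :: "jpt set \<Rightarrow> (real^3) \<times> (complex^3^3)" where
  "Q2 = qlift Qr"

lemma continuous_Q2: "continuous_map (join_top (top_of_set (sphere (0::real^3) 1)) (CP TYPE(3))) euclidean Q2"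
  unfolding join_alt Q2_def by (rule continuous_qlift[OF qequiv_RJ continuous_Qr RJ_Qr])

lemma Q2_cls: "p \<in> topspace JX \<Longrightarrow> Q2 (qcls JX RJ p) = Qr p"
  unfolding Q2_def by (rule qlift_qcls[OF qequiv_RJ _ RJ_Qr])

lemma compact_join: "compact_space (join_top (top_of_set (sphere (0::real^3) 1)) (CP TYPE(3)))"
proof -
  have a: "compact_space (top_of_set (sphere (0::real^3) 1))"
    by (rule compact_space_subtopology) simp
  have b: "compact_space (top_of_set {0..1::real})"
    by (rule compact_space_subtopology) simp
  have "compact_space JX"
    using a b compact_CP[where 'n=3] by (simp add: compact_space_prod_topology)
  then show ?thesis unfolding join_alt
    by (intro compact_qt[OF qequiv_RJ, of "topspace JX"]) (auto simp: compact_space_def)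
qed

lemma topspace_join: "topspace (join_top (top_of_set (sphere (0::real^3) 1)) (CP TYPE(3))) = qcls JX RJ ` topspace JX"
  unfolding join_alt by (rule topspace_qt[OF qequiv_RJ])

lemma Q2_image0: "Q2 ` topspace (join_top (top_of_set (sphere (0::real^3) 1)) (CP TYPE(3))) = Qr ` topspace JX"
  unfolding topspace_join image_image using Q2_cls by (intro image_cong) auto

lemma Qr_Rp:
  assumes x: "norm x = 1" and v: "v \<noteq> 0"
  shows "Qr (x, qcls XC RC v, s) = Rp ((1 - s) *\<^sub>R x) (s *\<^sub>R unitv v)"
  unfolding Qr_def using gj_Rp[OF x nsq_unitv[OF v]] hq_cls[OF v] hm_unitv[OF v] by simp

lemma nz_pair: "norm x = 1 \<Longrightarrow> v \<noteq> 0 \<Longrightarrow> (1 - s) *\<^sub>R x \<noteq> 0 \<or> s *\<^sub>R unitv v \<noteq> 0"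
  using unitv_ne[of v] by (cases "s = 1") auto


lemma topspace_JX_elim:
  assumes "a \<in> topspace JX"
  obtains x v s where "a = (x, qcls XC RC v, s)" "norm x = 1" "v \<noteq> 0" "0 \<le> s" "s \<le> 1"
proof -
  obtain x Y s where a: "a = (x, Y, s)" by (metis prod.exhaust)
  have x: "norm x = 1" and Y: "Y \<in> topspace (CP TYPE(3))" and s: "0 \<le> s" "s \<le> 1"
    using assms unfolding a by auto
  obtain v :: "complex^3" where v: "v \<noteq> 0" "Y = qcls XC RC v" using Y unfolding topspace_CP by auto
  show ?thesis using that[of x v s] a x v s by simp
qed

lemma Qr_inj:
  assumes a: "a \<in> topspace JX" and b: "b \<in> topspace JX" and e: "Qr a = Qr b"
  shows "RJ a b"
proof -
  obtain x v s where A: "a = (x, qcls XC RC v, s)" "norm x = 1" "v \<noteq> 0" "0 \<le> s" "s \<le> 1"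
    using topspace_JX_elim[OF a] by blast
  obtain x' v' s' where B: "b = (x', qcls XC RC v', s')" "norm x' = 1" "v' \<noteq> 0" "0 \<le> s'" "s' \<le> 1"
    using topspace_JX_elim[OF b] by blast
  define u where "u = unitv v"
  define u' where "u' = unitv v'"
  have nu: "nsq u = 1" "nsq u' = 1" unfolding u_def u'_def using A B nsq_unitv by auto
  have "Rp ((1 - s) *\<^sub>R x) (s *\<^sub>R u) = Rp ((1 - s') *\<^sub>R x') (s' *\<^sub>R u')"
    using e unfolding A(1) B(1) u_def u'_def Qr_Rp[OF A(2) A(3)] Qr_Rp[OF B(2) B(3)] .
  then obtain r l where r: "r > 0" and l: "cmod l = 1"
    and e1: "(1 - s') *\<^sub>R x' = r *\<^sub>R ((1 - s) *\<^sub>R x)"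
    and e2: "s' *\<^sub>R u' = (complex_of_real r * l) *s (s *\<^sub>R u)"
    using Rp_inj[OF nz_pair[OF A(2) A(3)] nz_pair[OF B(2) B(3)]] unfolding u_def u'_def by blast
  have "norm ((1 - s') *\<^sub>R x') = norm (r *\<^sub>R ((1 - s) *\<^sub>R x))" using e1 by simp
  then have f1: "1 - s' = r * (1 - s)" using A B r by simp
  have "nsq (s' *\<^sub>R u') = nsq ((complex_of_real r * l) *s (s *\<^sub>R u))" using e2 by simp
  then have "s'^2 = (r * s)^2" using nu l r by (simp add: nsq_sR nsq_scale norm_mult power_mult_distrib)
  then have f2: "s' = r * s" by (rule power2_eq_imp_eq) (use A B r in auto)
  have r1: "r = 1" using f1 f2 by (simp add: algebra_simps)
  have ss: "s = s'" using f2 r1 by simp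
  have xx: "s \<noteq> 1 \<longrightarrow> x = x'"
  proof
    assume "s \<noteq> 1"
    then have "(1 - s) *\<^sub>R x' = (1 - s) *\<^sub>R x" using e1 r1 ss by simp
    then show "x = x'" using \<open>s \<noteq> 1\<close> by simp
  qed
  have yy: "s \<noteq> 0 \<longrightarrow> qcls XC RC v = qcls XC RC v'"
  proof
    assume s0: "s \<noteq> 0"
    have "s *\<^sub>R u' = s *\<^sub>R (l *s u)" using e2 r1 ss by (simp add: sR_sm vector_smult_assoc mult.commute)
    then have "u' = l *s u" using s0 by simp
    then have "hm0 u' = hm0 u" using l by (simp add: hm0_scale)
    then have "hm v = hm v'" using hm_unitv[OF A(3)] hm_unitv[OF B(3)] unfolding u_def u'_def by simp
    then have "RC v v'" using hm_inj A(3) B(3) by blast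
    then show "qcls XC RC v = qcls XC RC v'" using qcls_eq_iff[OF qequiv_RC, of v v'] A(3) B(3) by simp
  qed
  show ?thesis unfolding A(1) B(1) RJ_iff using ss xx yy by simp
qed

lemma Q2_inj: "inj_on Q2 (topspace (join_top (top_of_set (sphere (0::real^3) 1)) (CP TYPE(3))))"
proof (rule inj_onI)
  fix p q assume p: "p \<in> topspace (join_top (top_of_set (sphere (0::real^3) 1)) (CP TYPE(3)))"
    and q: "q \<in> topspace (join_top (top_of_set (sphere (0::real^3) 1)) (CP TYPE(3)))" and e: "Q2 p = Q2 q"
  obtain a where a: "a \<in> topspace JX" "p = qcls JX RJ a" using p unfolding topspace_join by blast
  obtain b where b: "b \<in> topspace JX" "q = qcls JX RJ b" using q unfolding topspace_join by blast
  have "Qr a = Qr b" using e a b Q2_cls by metis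
  then have "RJ a b" using Qr_inj a b by blast
  then show "p = q" using a b qcls_eq_iff[OF qequiv_RJ a(1) b(1)] by simp
qed

lemma Qr_image: "Qr ` topspace JX = Pz ` (UNIV - {0})"
proof
  show "Qr ` topspace JX \<subseteq> Pz ` (UNIV - {0})"
  proof
    fix y assume "y \<in> Qr ` topspace JX"
    then obtain a where a: "a \<in> topspace JX" "y = Qr a" by blast
    obtain x v s where A: "a = (x, qcls XC RC v, s)" "norm x = 1" "v \<noteq> 0" "0 \<le> s" "s \<le> 1"
      using topspace_JX_elim[OF a(1)] by blast
    obtain z where z: "z \<noteq> 0" "dd z = (1 - s) *\<^sub>R x" "ww z = s *\<^sub>R unitv v"
      using dd_ww_surj[OF nz_pair[OF A(2) A(3)]] by blast
    have "y = Pz z" unfolding a(2) A(1) Qr_Rp[OF A(2) A(3)] Pz_def z(2,3) ..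
    then show "y \<in> Pz ` (UNIV - {0})" using z(1) by blast
  qed
next
  show "Pz ` (UNIV - {0}) \<subseteq> Qr ` topspace JX"
  proof
    fix y assume "y \<in> Pz ` (UNIV - {0})"
    then obtain z where z: "z \<noteq> 0" "y = Pz z" by blast
    define d where "d = dd z"
    define w where "w = ww z"
    have nz: "d \<noteq> 0 \<or> w \<noteq> 0" unfolding d_def w_def using dd_ww_nz[OF z(1)] .
    define nd where "nd = norm d"
    define nw where "nw = sqrt (nsq w)"
    have nd0: "nd \<ge> 0" "nd = 0 \<longleftrightarrow> d = 0" unfolding nd_def by simp_all
    have nw0: "nw \<ge> 0" "nw = 0 \<longleftrightarrow> w = 0" unfolding nw_def using nsq_nonneg[of w] nsq_zero_iff[of w] by simp_all
    define \<rho> where "\<rho> = nd + nw"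
    have \<rho>: "\<rho> > 0" unfolding \<rho>_def using nd0 nw0 nz by (cases "d = 0") auto
    define s where "s = nw / \<rho>"
    have s: "0 \<le> s" "s \<le> 1" unfolding s_def \<rho>_def using nd0 nw0 \<rho> \<rho>_def by (auto simp: divide_le_eq_1)
    have s1: "1 - s = nd / \<rho>" unfolding s_def using \<rho> unfolding \<rho>_def by (simp add: field_simps)
    define x :: "real^3" where "x = (if d = 0 then axis 1 1 else (1 / nd) *\<^sub>R d)"
    define v :: "complex^3" where "v = (if w = 0 then axis 1 1 else w)"
    have x: "norm x = 1" unfolding x_def nd_def by simp
    have v: "v \<noteq> 0" unfolding v_def by simp
    have ex: "(1 - s) *\<^sub>R x = (1 / \<rho>) *\<^sub>R d"
    proof (cases "d = 0")
      case True then show ?thesis unfolding s1 using nd0 by simp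
    next
      case False then show ?thesis unfolding s1 x_def using nd0 by simp
    qed
    have ew: "s *\<^sub>R unitv v = (1 / \<rho>) *\<^sub>R w"
    proof (cases "w = 0")
      case True then show ?thesis unfolding s_def using nw0 by simp
    next
      case False
      have "nw > 0" using nw0 False by simp
      then show ?thesis unfolding s_def v_def unitv_def using False by (simp add: nw_def)
    qed
    have "qcls XC RC v \<in> topspace (CP TYPE(3))" unfolding topspace_CP using v by blast
    then have a: "(x, qcls XC RC v, s) \<in> topspace JX" using x s by simp
    have "Qr (x, qcls XC RC v, s) = Rp ((1 / \<rho>) *\<^sub>R d) ((1 / \<rho>) *\<^sub>R w)"
      unfolding Qr_Rp[OF x v] ex ew ..
    also have "... = Rp ((1 / \<rho>) *\<^sub>R d) ((complex_of_real (1 / \<rho>) * 1) *s w)" by (simp add: sR_sm)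
    also have "... = Rp d w" by (rule Rp_scale) (use \<rho> in auto)
    also have "... = y" unfolding z(2) Pz_def d_def w_def ..
    finally show "y \<in> Qr ` topspace JX" using a by blast
  qed
qed

lemma homeo_sub:
  assumes "continuous_map X euclidean f" "compact_space X" "inj_on f (topspace X)"
  shows "X homeomorphic_space (subtopology euclidean (f ` topspace X) :: ('b::metric_space) topology)"
proof -
  have "homeomorphic_map X (subtopology euclidean (f ` topspace X)) f"
  proof (rule continuous_imp_homeomorphic_map)
    show "continuous_map X (subtopology euclidean (f ` topspace X)) f"
      using assms(1) by (rule continuous_map_into_subtopology) auto
    show "Hausdorff_space (subtopology euclidean (f ` topspace X) :: 'b topology)"
      by (rule Hausdorff_space_subtopology) simp
  qed (use assms in auto)
  then show ?thesis by (rule homeomorphic_map_imp_homeomorphic_space)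
qed

theorem mainTheorem13:
  shows "CP5_mod_T4 homeomorphic_space
           join_top (top_of_set (sphere (0 :: real ^ 3) 1)) (CP TYPE(3))"
proof -
  have h1: "CP5_mod_T4 homeomorphic_space subtopology euclidean (Pz ` (UNIV - {0}))"
    using homeo_sub[OF continuous_P2 compact_CP5 P2_inj] unfolding P2_image .
  have h2: "join_top (top_of_set (sphere (0 :: real ^ 3) 1)) (CP TYPE(3)) homeomorphic_space subtopology euclidean (Pz ` (UNIV - {0}))"
    using homeo_sub[OF continuous_Q2 compact_join Q2_inj] unfolding Q2_image0 Qr_image .
  have h3: "subtopology euclidean (Pz ` (UNIV - {0})) homeomorphic_space join_top (top_of_set (sphere (0 :: real ^ 3) 1)) (CP TYPE(3))"
    by (subst homeomorphic_space_sym) (rule h2)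
  show ?thesis by (rule homeomorphic_space_trans[OF h1 h3])
qed


end
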